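(* Let $V$ be a finite ground set with $n=|V|$, let $f:2^V\to\mathbb{R}_{\ge 0}$ be monotone submodular, let $k\ge1$ and $t\ge 1$ be integers, and let $OPT=\max_{A\subseteq V,|A|\le k} f(A)$. For $1\le\ell\le t$ let $\alpha_\ell=\left(1-\frac{1}{t+1}\right)^\ell\frac{OPT}{k}$. Run the following randomized procedure (Algorithm 2): set $G=\emptyset$; for $\ell=1,\dots,t$: (i) draw a fresh random set $S\subseteq V$ containing each element independently with probability $p=4\sqrt{k/n}$, and partition $V$ at random into sets $V_1,\dots,V_m$; (ii) compute $G_0=\textsc{ThresholdGreedy}(S,G,\alpha_\ell)$; (iii) for each $i$, set $R_i=\textsc{ThresholdFilter}(V_i,G_0,\alpha_\ell)$ if $|G_0|<k$ and $R_i=\emptyset$ otherwise; (iv) set $G=\textsc{ThresholdGreedy}\big(\bigcup_i R_i,\,G_0,\,\alpha_\ell\big)$. Output $G$. Then the approximation ratio of this algorithm is at least $1-\left(1-\frac{1}{t+1}\right)^t$; namely, for every outcome of the random choices, $f(G)\ge\left(1-\left(1-\frac{1}{t+1}\right)^t\right)OPT$.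
   Context: A function $f:2^V\to\mathbb{R}_{\ge0}$ is submodular if $f(A\cup\{e\})-f(A)\ge f(B\cup\{e\})-f(B)$ for all $A\subseteq B\subseteq V$ and $e\notin B$, and monotone if $f(A\cup\{e\})-f(A)\ge 0$ for all $A$ and $e\notin A$. For $A\subseteq V$, $e\in V$ write $f_A(e)=f(A\cup\{e\})-f(A)$. Fix a total order on $V$; all sets are scanned in this order. $\textsc{ThresholdGreedy}(T,G,\tau)$ (for $|G|\le k$): start with $G'=G$; scan $e\in T$ in the fixed order, and whenever $f_{G'}(e)\ge\tau$ and $|G'|<k$, add $e$ to $G'$; return $G'$. $\textsc{ThresholdFilter}(T,G,\tau)$ returns $\{e\in T: f_G(e)\ge\tau\}$. Here $m$ is the number of machines (the paper takes $m=\sqrt{n/k}$). *)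

theory Defs
  imports Complex_Main
begin

definition nonneg_on :: "'a set \<Rightarrow> ('a set \<Rightarrow> real) \<Rightarrow> bool" where
  "nonneg_on V f \<longleftrightarrow> (\<forall>A. A \<subseteq> V \<longrightarrow> f A \<ge> 0)"

definition monotone_on_sets :: "'a set \<Rightarrow> ('a set \<Rightarrow> real) \<Rightarrow> bool" where
  "monotone_on_sets V f \<longleftrightarrow>
     (\<forall>A e. A \<subseteq> V \<longrightarrow> e \<in> V - A \<longrightarrow> f (insert e A) - f A \<ge> 0)"

definition submodular_on :: "'a set \<Rightarrow> ('a set \<Rightarrow> real) \<Rightarrow> bool" where
  "submodular_on V f \<longleftrightarrow>
     (\<forall>A B e. A \<subseteq> B \<longrightarrow> B \<subseteq> V \<longrightarrow> e \<in> V - B \<longrightarrow>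
        f (insert e A) - f A \<ge> f (insert e B) - f B)"

definition OPT :: "'a set \<Rightarrow> ('a set \<Rightarrow> real) \<Rightarrow> nat \<Rightarrow> real" where
  "OPT V f k = Max {f A | A. A \<subseteq> V \<and> card A \<le> k}"

text \<open>The fixed total order on V is given by a distinct list ord enumerating V;
  a set T is scanned by going through ord and looking only at elements of T.\<close>
definition threshold_greedy ::
  "('a set \<Rightarrow> real) \<Rightarrow> nat \<Rightarrow> 'a list \<Rightarrow> 'a set \<Rightarrow> 'a set \<Rightarrow> real \<Rightarrow> 'a set" where
  "threshold_greedy f k ord T G \<tau> =
     foldl (\<lambda>G' e. if e \<in> T \<and> f (insert e G') - f G' \<ge> \<tau> \<and> card G' < k
                   then insert e G' else G') G ord"

definition threshold_filter ::
  "('a set \<Rightarrow> real) \<Rightarrow> 'a set \<Rightarrow> 'a set \<Rightarrow> real \<Rightarrow> 'a set" where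
  "threshold_filter f T G \<tau> = {e \<in> T. f (insert e G) - f G \<ge> \<tau>}"

definition alg_round ::
  "('a set \<Rightarrow> real) \<Rightarrow> nat \<Rightarrow> 'a list \<Rightarrow> nat \<Rightarrow> real \<Rightarrow> 'a set \<Rightarrow> (nat \<Rightarrow> 'a set)
     \<Rightarrow> 'a set \<Rightarrow> 'a set" where
  "alg_round f k ord m \<tau> S P G =
     (let G0 = threshold_greedy f k ord S G \<tau>;
          R = (\<lambda>i. if card G0 < k then threshold_filter f (P i) G0 \<tau> else {})
      in threshold_greedy f k ord (\<Union>i<m. R i) G0 \<tau>)"

definition alpha :: "nat \<Rightarrow> real \<Rightarrow> nat \<Rightarrow> nat \<Rightarrow> real" where
  "alpha t opt k l = (1 - 1 / (real t + 1)) ^ l * opt / real k"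

text \<open>State G after the first l rounds, for the outcome S (samples), P (partitions)
  of the random choices; S l and P l are used in round l (1-based).\<close>
primrec alg_state ::
  "'a set \<Rightarrow> ('a set \<Rightarrow> real) \<Rightarrow> nat \<Rightarrow> nat \<Rightarrow> 'a list \<Rightarrow> nat \<Rightarrow> (nat \<Rightarrow> 'a set)
     \<Rightarrow> (nat \<Rightarrow> nat \<Rightarrow> 'a set) \<Rightarrow> nat \<Rightarrow> 'a set" where
  "alg_state V f k t ord m S P 0 = {}"
| "alg_state V f k t ord m S P (Suc l) =
     alg_round f k ord m (alpha t (OPT V f k) k (Suc l)) (S (Suc l)) (P (Suc l))
       (alg_state V f k t ord m S P l)"

end

theory Submission imports Defs begin

definition gstep :: "('a set \<Rightarrow> real) \<Rightarrow> nat \<Rightarrow> 'a set \<Rightarrow> real \<Rightarrow> 'a set \<Rightarrow> 'a \<Rightarrow> 'a set" where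
  "gstep f k T \<tau> = (\<lambda>G' e. if e \<in> T \<and> f (insert e G') - f G' \<ge> \<tau> \<and> card G' < k
                   then insert e G' else G')"

lemma tg_def: "threshold_greedy f k ord T G \<tau> = foldl (gstep f k T \<tau>) G ord"
  unfolding threshold_greedy_def gstep_def by simp

lemma g_mono: "G \<subseteq> foldl (gstep f k T \<tau>) G xs \<and> foldl (gstep f k T \<tau>) G xs \<subseteq> G \<union> (set xs \<inter> T)"
proof (induction xs arbitrary: G)
  case Nil then show ?case by simp
next
  case (Cons e xs)
  from Cons[of "gstep f k T \<tau> G e"] show ?case by (auto simp: gstep_def split: if_splits)
qed

lemma g_card: "finite G \<Longrightarrow> card G \<le> k \<Longrightarrow> finite (foldl (gstep f k T \<tau>) G xs) \<and> card (foldl (gstep f k T \<tau>) G xs) \<le> k"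
proof (induction xs arbitrary: G)
  case Nil then show ?case by simp
next
  case (Cons e xs)
  have "finite (gstep f k T \<tau> G e) \<and> card (gstep f k T \<tau> G e) \<le> k"
    using Cons.prems by (auto simp: gstep_def card_insert_if)
  with Cons.IH show ?case by simp
qed

lemma g_card_mono: "finite G \<Longrightarrow> card G \<le> card (foldl (gstep f k T \<tau>) G xs)"
proof -
  assume "finite G"
  have "finite (G \<union> (set xs \<inter> T))" using \<open>finite G\<close> by simp
  then show ?thesis using g_mono[of G f k T \<tau> xs] by (meson card_mono finite_subset)
qed

lemma g_gain: "finite G \<Longrightarrow> f (foldl (gstep f k T \<tau>) G xs) - f G \<ge> \<tau> * (real (card (foldl (gstep f k T \<tau>) G xs)) - real (card G))"
proof (induction xs arbitrary: G)
  case Nil then show ?case by simp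
next
  case (Cons e xs)
  define G1 where "G1 = gstep f k T \<tau> G e"
  have fin: "finite G1" using Cons.prems by (auto simp: G1_def gstep_def)
  have s1: "f G1 - f G \<ge> \<tau> * (real (card G1) - real (card G))"
  proof (cases "e \<in> T \<and> f (insert e G) - f G \<ge> \<tau> \<and> card G < k")
    case True
    then have g1: "G1 = insert e G" by (simp add: G1_def gstep_def)
    show ?thesis
    proof (cases "e \<in> G")
      case True then show ?thesis using g1 by (simp add: insert_absorb)
    next
      case False then show ?thesis using g1 Cons.prems \<open>e \<in> T \<and> f (insert e G) - f G \<ge> \<tau> \<and> card G < k\<close> by simp
    qed
  next
    case False
    have "G1 = G" unfolding G1_def gstep_def using False by (simp only: if_not_P if_False)
    then show ?thesis by simp
  qed
  have "f (foldl (gstep f k T \<tau>) G1 xs) - f G1 \<ge> \<tau> * (real (card (foldl (gstep f k T \<tau>) G1 xs)) - real (card G1))"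
    using Cons.IH fin by blast
  with s1 have "f (foldl (gstep f k T \<tau>) G1 xs) - f G \<ge> \<tau> * (real (card (foldl (gstep f k T \<tau>) G1 xs)) - real (card G))"
    by (simp add: algebra_simps)
  then show ?case by (simp add: G1_def)
qed

lemma g_sat:
  assumes "submodular_on V f" "finite V" "G \<subseteq> V" "set xs \<subseteq> V"
    and "card (foldl (gstep f k T \<tau>) G xs) < k" "e \<in> set xs" "e \<in> T"
    and "e \<notin> foldl (gstep f k T \<tau>) G xs"
  shows "f (insert e (foldl (gstep f k T \<tau>) G xs)) - f (foldl (gstep f k T \<tau>) G xs) < \<tau>"
  using assms
proof (induction xs arbitrary: G)
  case Nil then show ?case by simp
next
  case (Cons x xs)
  define G1 where "G1 = gstep f k T \<tau> G x"
  define R where "R = foldl (gstep f k T \<tau>) G1 xs"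
  have G1V: "G1 \<subseteq> V" using Cons.prems by (auto simp: G1_def gstep_def)
  show ?case
  proof (cases "e \<in> set xs")
    case True
    then show ?thesis using Cons.IH[of G1] Cons.prems G1V by (simp add: G1_def)
  next
    case False
    then have ex: "e = x" using Cons.prems by simp
    have RV: "R \<subseteq> V" using g_mono[of G1 f k T \<tau> xs] G1V Cons.prems by (auto simp: R_def)
    have finR: "finite R" using RV Cons.prems finite_subset by blast
    have GR: "G \<subseteq> R" using g_mono[of G f k T \<tau> "x#xs"] by (simp add: R_def G1_def)
    have "card G \<le> card R" using GR finR card_mono by blast
    then have cG: "card G < k" using Cons.prems by (simp add: R_def G1_def)
    have eR: "e \<notin> R" using Cons.prems by (simp add: R_def G1_def)
    have lt: "f (insert e G) - f G < \<tau>"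
    proof (rule ccontr)
      assume "\<not> ?thesis"
      then have "G1 = insert e G" using cG Cons.prems ex by (auto simp: G1_def gstep_def)
      then have "e \<in> R" using g_mono[of G1 f k T \<tau> xs] by (auto simp: R_def)
      with eR show False by simp
    qed
    have "e \<in> V" using Cons.prems by auto
    then have "f (insert e G) - f G \<ge> f (insert e R) - f R"
      using Cons.prems(1) GR RV eR unfolding submodular_on_def by blast
    with lt show ?thesis by (simp add: R_def G1_def)
  qed
qed


lemma round_facts:
  fixes f :: "'a set \<Rightarrow> real" and \<tau> :: real and T :: "'a set" and Q :: "nat \<Rightarrow> 'a set" and G :: "'a set"
    and k m :: nat and ord :: "'a list"
  assumes sub: "submodular_on V f" and fV: "finite V" and ordV: "set ord = V"
    and GV: "G \<subseteq> V" and cG: "card G \<le> k" and PV: "(\<Union>i<m. Q i) = V"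
  defines "G' \<equiv> alg_round f k ord m \<tau> T Q G"
  shows "G \<subseteq> G'" "G' \<subseteq> V" "card G' \<le> k"
    "f G' - f G \<ge> \<tau> * (real (card G') - real (card G))"
    "card G' < k \<Longrightarrow> \<forall>e \<in> V - G'. f (insert e G') - f G' < \<tau>"
proof -
  define G0 where "G0 = foldl (gstep f k T \<tau>) G ord"
  define R where "R = (\<Union>i<m. (if card G0 < k then threshold_filter f (Q i) G0 \<tau> else {}))"
  have G'_eq: "G' = foldl (gstep f k R \<tau>) G0 ord"
    unfolding G'_def alg_round_def G0_def R_def tg_def Let_def by simp
  have finG: "finite G" using GV fV finite_subset by blast
  have G0V: "G0 \<subseteq> V" using g_mono[of G f k T \<tau> ord] GV ordV by (auto simp: G0_def)
  have finG0: "finite G0" using G0V fV finite_subset by blast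
  have GG0: "G \<subseteq> G0" using g_mono[of G f k T \<tau> ord] by (auto simp: G0_def)
  have G0G': "G0 \<subseteq> G'" using g_mono[of G0 f k R \<tau> ord] by (auto simp: G'_eq)
  show GV': "G' \<subseteq> V" using g_mono[of G0 f k R \<tau> ord] G0V ordV by (auto simp: G'_eq)
  show "G \<subseteq> G'" using GG0 G0G' by blast
  have cG0: "card G0 \<le> k" using g_card[OF finG cG] by (simp add: G0_def)
  show "card G' \<le> k" using g_card[OF finG0 cG0] by (simp add: G'_eq)
  have a1: "f G0 - f G \<ge> \<tau> * (real (card G0) - real (card G))"
    using g_gain[OF finG] by (simp add: G0_def)
  have a2: "f G' - f G0 \<ge> \<tau> * (real (card G') - real (card G0))"
    using g_gain[OF finG0] by (simp add: G'_eq)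
  from a1 a2 show "f G' - f G \<ge> \<tau> * (real (card G') - real (card G))"
    by (simp add: algebra_simps)
  assume cG': "card G' < k"
  have "card G0 \<le> card G'" using g_card_mono[OF finG0] by (simp add: G'_eq)
  then have c0: "card G0 < k" using cG' by simp
  have Req: "R = {e \<in> V. f (insert e G0) - f G0 \<ge> \<tau>}"
    using c0 PV unfolding R_def threshold_filter_def by auto
  show "\<forall>e \<in> V - G'. f (insert e G') - f G' < \<tau>"
  proof
    fix e assume e: "e \<in> V - G'"
    show "f (insert e G') - f G' < \<tau>"
    proof (cases "e \<in> R")
      case True
      then show ?thesis using g_sat[OF sub fV G0V, of ord k R \<tau> e] ordV cG' e
        by (simp add: G'_eq)
    next
      case False
      then have "f (insert e G0) - f G0 < \<tau>" using Req e by auto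
      moreover have "f (insert e G0) - f G0 \<ge> f (insert e G') - f G'"
        using sub G0G' GV' e unfolding submodular_on_def by blast
      ultimately show ?thesis by simp
    qed
  qed
qed

lemma mono_subset:
  assumes "monotone_on_sets V f" "finite V" "A \<subseteq> B" "B \<subseteq> V"
  shows "f A \<le> f B"
proof -
  have fin: "finite (B - A)" using assms finite_subset by blast
  have "\<And>D. finite D \<Longrightarrow> D \<subseteq> B - A \<Longrightarrow> f A \<le> f (A \<union> D)"
  proof -
    fix D :: "'a set" assume "finite D" "D \<subseteq> B - A"
    then show "f A \<le> f (A \<union> D)"
    proof (induction D rule: finite_induct)
      case empty then show ?case by simp
    next
      case (insert x D)
      have "x \<in> V - (A \<union> D)" using insert assms by auto
      moreover have "A \<union> D \<subseteq> V" using insert assms by auto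
      ultimately have "f (insert x (A \<union> D)) - f (A \<union> D) \<ge> 0"
        using assms(1) unfolding monotone_on_sets_def by blast
      then show ?case using insert by simp
    qed
  qed
  from this[OF fin] have "f A \<le> f (A \<union> (B - A))" by simp
  moreover have "A \<union> (B - A) = B" using assms by auto
  ultimately show ?thesis by simp
qed

lemma sub_sum:
  assumes sub: "submodular_on V f" and fV: "finite V" and GV: "G \<subseteq> V"
    and sat: "\<forall>e \<in> V - G. f (insert e G) - f G < \<tau>"
  shows "finite D \<Longrightarrow> D \<subseteq> V - G \<Longrightarrow> f (G \<union> D) - f G \<le> \<tau> * real (card D)"
proof (induction D rule: finite_induct)
  case empty then show ?case by simp
next
  case (insert x D)
  have "f (insert x G) - f G \<ge> f (insert x (G \<union> D)) - f (G \<union> D)"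
  proof -
    have "G \<subseteq> G \<union> D" "G \<union> D \<subseteq> V" "x \<in> V - (G \<union> D)" using insert.prems insert.hyps GV by auto
    then show ?thesis using sub unfolding submodular_on_def by blast
  qed
  moreover have "f (insert x G) - f G < \<tau>" using sat insert.prems by auto
  moreover have "f (G \<union> D) - f G \<le> \<tau> * real (card D)" using insert by auto
  ultimately show ?case using insert.hyps by (simp add: algebra_simps)
qed

lemma opt_exists:
  assumes "finite V"
  shows "\<exists>Op. Op \<subseteq> V \<and> card Op \<le> k \<and> f Op = OPT V f k"
proof -
  have eq: "{f A | A. A \<subseteq> V \<and> card A \<le> k} = f ` {A. A \<subseteq> V \<and> card A \<le> k}" by auto
  have fin: "finite {A. A \<subseteq> V \<and> card A \<le> k}" using assms by simp
  have "{} \<in> {A. A \<subseteq> V \<and> card A \<le> k}" by simp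
  then have ne: "{A. A \<subseteq> V \<and> card A \<le> k} \<noteq> {}" by blast
  have "OPT V f k \<in> f ` {A. A \<subseteq> V \<and> card A \<le> k}"
    unfolding OPT_def eq using fin ne by (intro Max_in) auto
  then show ?thesis by auto
qed

lemma opt_ge:
  assumes "finite V" "A \<subseteq> V" "card A \<le> k"
  shows "f A \<le> OPT V f k"
proof -
  have eq: "{f A | A. A \<subseteq> V \<and> card A \<le> k} = f ` {A. A \<subseteq> V \<and> card A \<le> k}" by auto
  have fin: "finite {A. A \<subseteq> V \<and> card A \<le> k}" using assms by simp
  show ?thesis unfolding OPT_def eq using fin assms by (intro Max_ge) auto
qed

lemma floor_bound:
  assumes sub: "submodular_on V f" and mon: "monotone_on_sets V f" and fV: "finite V" and GV: "G \<subseteq> V"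
    and sat: "\<forall>e \<in> V - G. f (insert e G) - f G < \<tau>" and tau: "\<tau> \<ge> 0"
  shows "f G \<ge> OPT V f k - real k * \<tau>"
proof -
  obtain Op where Op: "Op \<subseteq> V" "card Op \<le> k" "f Op = OPT V f k" using opt_exists[OF fV] by blast
  have fin: "finite (Op - G)" using Op fV finite_subset by blast
  have a: "f (G \<union> (Op - G)) - f G \<le> \<tau> * real (card (Op - G))"
    using sub_sum[OF sub fV GV sat fin] Op by auto
  have "card (Op - G) \<le> k" using Op fin
    by (meson Diff_subset card_mono fV finite_subset le_trans)
  then have b: "\<tau> * real (card (Op - G)) \<le> \<tau> * real k" using tau by (simp add: mult_left_mono)
  have e: "G \<union> (Op - G) = G \<union> Op" by auto
  have c: "f Op \<le> f (G \<union> Op)" by (rule mono_subset[OF mon fV]) (use Op GV in auto)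
  show ?thesis using a b c e Op by (simp add: algebra_simps)
qed


lemma arith_nn:
  fixes r x Opt F F' A C C' :: real
  assumes r0: "0 \<le> r" "r \<le> 1"
    and h1: "F' - F \<ge> A * (C' - C)" and h2: "F' \<ge> Opt * (1 - r * x)"
    and h3: "F - A * C \<ge> Opt * (1 - r * x - (real i + 1) * (1 - r) * x)"
  shows "F' - (r * A) * C' \<ge> Opt * (1 - r * (r * x) - (real (Suc i) + 1) * (1 - r) * (r * x))"
proof -
  have p1: "r * (F' - F - A * (C' - C)) \<ge> 0" using r0 h1 by simp
  have p2: "(1 - r) * (F' - Opt * (1 - r * x)) \<ge> 0" using r0 h2 by simp
  have p3: "r * (F - A * C - Opt * (1 - r * x - (real i + 1) * (1 - r) * x)) \<ge> 0" using r0 h3 by simp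
  have id: "F' - (r * A) * C' - Opt * (1 - r * (r * x) - (real (Suc i) + 1) * (1 - r) * (r * x))
    = r * (F' - F - A * (C' - C)) + (1 - r) * (F' - Opt * (1 - r * x)) + r * (F - A * C - Opt * (1 - r * x - (real i + 1) * (1 - r) * x))"
    by (simp add: algebra_simps)
  show ?thesis using p1 p2 p3 id by linarith
qed

lemma bern:
  fixes t i :: nat
  assumes "Suc i \<le> t"
  shows "(real i + 1) * (1 - (1 - 1 / (real t + 1))) * (1 - 1 / (real t + 1)) ^ i \<le> (1 - 1 / (real t + 1)) ^ t"
proof -
  define r where "r = 1 - 1 / (real t + 1)"
  have r0: "0 \<le> r" unfolding r_def by (simp add: field_simps)
  have "1 + real (t - i) * (- 1 / (real t + 1)) \<le> (1 + (- 1 / (real t + 1))) ^ (t - i)"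
    by (rule Bernoulli_inequality) (simp add: field_simps)
  moreover have "1 + real (t - i) * (- 1 / (real t + 1)) = (real i + 1) * (1 - r)"
    using assms unfolding r_def by (simp add: field_simps of_nat_diff)
  moreover have "(1 + (- 1 / (real t + 1))) = r" unfolding r_def by simp
  ultimately have b: "(real i + 1) * (1 - r) \<le> r ^ (t - i)" by simp
  have "(real i + 1) * (1 - r) * r ^ i \<le> r ^ (t - i) * r ^ i"
    using b r0 by (simp add: mult_right_mono)
  also have "\<dots> = r ^ t" using assms by (simp add: power_add[symmetric])
  finally show ?thesis unfolding r_def .
qed


theorem lemma3:
  fixes V :: "'a set" and f :: "'a set \<Rightarrow> real" and k t m :: nat
    and ord :: "'a list" and S :: "nat \<Rightarrow> 'a set" and P :: "nat \<Rightarrow> nat \<Rightarrow> 'a set"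
  assumes "finite V"
    and "set ord = V" and "distinct ord"
    and "nonneg_on V f" and "monotone_on_sets V f" and "submodular_on V f"
    and "k \<ge> 1" and "t \<ge> 1"
    and "\<And>l. l \<in> {1..t} \<Longrightarrow> S l \<subseteq> V"
    and "\<And>l. l \<in> {1..t} \<Longrightarrow> (\<Union>i<m. P l i) = V"
    and "\<And>l. l \<in> {1..t} \<Longrightarrow> (\<forall>i<m. \<forall>j<m. i \<noteq> j \<longrightarrow> P l i \<inter> P l j = {})"
  shows "f (alg_state V f k t ord m S P t) \<ge> (1 - (1 - 1 / (real t + 1)) ^ t) * OPT V f k"
proof -
  note fV = assms(1) and ordV = assms(2) and nn = assms(4) and mon = assms(5) and sub = assms(6)
  define r where "r = 1 - 1 / (real t + 1)"
  define Opt where "Opt = OPT V f k"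
  define al where "al = (\<lambda>j. alpha t Opt k j)"
  define Gs where "Gs = (\<lambda>j. alg_state V f k t ord m S P j)"
  have r0: "0 \<le> r" "r \<le> 1" unfolding r_def by (simp_all add: field_simps)
  have kpos: "real k > 0" using assms(7) by simp
  have f0: "f {} \<ge> 0" using nn unfolding nonneg_on_def by simp
  have Opt0: "Opt \<ge> 0" using opt_ge[OF fV, of "{}" k f] f0 unfolding Opt_def by simp
  have al_eq: "\<And>j. al j = r ^ j * Opt / real k" unfolding al_def alpha_def r_def by simp
  have kal: "\<And>j. real k * al j = r ^ j * Opt" using kpos unfolding al_eq by simp
  have al0: "\<And>j. al j \<ge> 0" unfolding al_eq using r0 Opt0 by simp
  have alS: "\<And>j. al (Suc j) = r * al j" unfolding al_eq by simp
  have GsS: "\<And>i. Gs (Suc i) = alg_round f k ord m (al (Suc i)) (S (Suc i)) (P (Suc i)) (Gs i)"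
    unfolding Gs_def al_def Opt_def by simp
  have PV: "\<And>i. Suc i \<le> t \<Longrightarrow> (\<Union>j<m. P (Suc i) j) = V" using assms(10) by simp
  have inv0: "\<And>j. j \<le> t \<Longrightarrow> Gs j \<subseteq> V \<and> card (Gs j) \<le> k"
  proof -
    fix j show "j \<le> t \<Longrightarrow> Gs j \<subseteq> V \<and> card (Gs j) \<le> k"
    proof (induction j)
      case 0 then show ?case by (simp add: Gs_def)
    next
      case (Suc i)
      then have h: "Gs i \<subseteq> V" "card (Gs i) \<le> k" by auto
      show ?case unfolding GsS using round_facts(2,3)[OF sub fV ordV h PV[OF Suc.prems]] by blast
    qed
  qed
  have step: "\<And>i. Suc i \<le> t \<Longrightarrow> card (Gs i) \<le> card (Gs (Suc i)) \<and> card (Gs (Suc i)) \<le> k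
       \<and> f (Gs (Suc i)) - f (Gs i) \<ge> al (Suc i) * (real (card (Gs (Suc i))) - real (card (Gs i)))
       \<and> (card (Gs (Suc i)) < k \<longrightarrow> f (Gs (Suc i)) \<ge> Opt * (1 - r ^ Suc i))"
  proof -
    fix i assume it: "Suc i \<le> t"
    then have h: "Gs i \<subseteq> V" "card (Gs i) \<le> k" using inv0 by auto
    note rf = round_facts[OF sub fV ordV h PV[OF it], of "al (Suc i)" "S (Suc i)", folded GsS]
    have fin: "finite (Gs (Suc i))" using rf(2) fV finite_subset by blast
    have c1: "card (Gs i) \<le> card (Gs (Suc i))" using rf(1) fin card_mono by blast
    have fl: "card (Gs (Suc i)) < k \<longrightarrow> f (Gs (Suc i)) \<ge> Opt * (1 - r ^ Suc i)"
    proof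
      assume "card (Gs (Suc i)) < k"
      from rf(5)[OF this] have "f (Gs (Suc i)) \<ge> OPT V f k - real k * al (Suc i)"
        using floor_bound[OF sub mon fV rf(2) _ al0] by blast
      then show "f (Gs (Suc i)) \<ge> Opt * (1 - r ^ Suc i)" using kal[of "Suc i"] unfolding Opt_def
        by (simp add: algebra_simps)
    qed
    show "?thesis i" using c1 rf(3) rf(4) fl by blast
  qed
  define Inv where "Inv = (\<lambda>j. (card (Gs j) < k \<and> f (Gs j) - al (Suc j) * real (card (Gs j))
        \<ge> Opt * (1 - r ^ Suc j - (real j + 1) * (1 - r) * r ^ j))
      \<or> (card (Gs j) = k \<and> f (Gs j) \<ge> Opt * (1 - r ^ t)))"
  have inv: "\<And>j. j \<le> t \<Longrightarrow> Inv j"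
  proof -
    fix j show "j \<le> t \<Longrightarrow> Inv j"
    proof (induction j)
      case 0
      show ?case unfolding Inv_def using f0 assms(7) by (simp add: Gs_def)
    next
      case (Suc i)
      have IH: "Inv i" using Suc by simp
      note st = step[OF Suc.prems]
      show ?case
      proof (cases "card (Gs i) = k")
        case True
        then have ck: "card (Gs (Suc i)) = k" using st by linarith
        have "f (Gs (Suc i)) \<ge> f (Gs i)" using st True ck by simp
        moreover have "f (Gs i) \<ge> Opt * (1 - r ^ t)" using IH True unfolding Inv_def by auto
        ultimately show ?thesis unfolding Inv_def using ck by auto
      next
        case False
        then have ih: "f (Gs i) - al (Suc i) * real (card (Gs i))
            \<ge> Opt * (1 - r * r ^ i - (real i + 1) * (1 - r) * r ^ i)" using IH unfolding Inv_def by auto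
        show ?thesis
        proof (cases "card (Gs (Suc i)) < k")
          case True
          have h2: "f (Gs (Suc i)) \<ge> Opt * (1 - r * r ^ i)" using st True by simp
          have "f (Gs (Suc i)) - (r * al (Suc i)) * real (card (Gs (Suc i)))
             \<ge> Opt * (1 - r * (r * r ^ i) - (real (Suc i) + 1) * (1 - r) * (r * r ^ i))"
            by (rule arith_nn[OF r0 _ h2 ih]) (use st in simp)
          then show ?thesis unfolding Inv_def using True alS by simp
        next
          case False
          then have ck: "card (Gs (Suc i)) = k" using st by linarith
          have "Opt * (1 - (real i + 1) * (1 - r) * r ^ i) \<le> (f (Gs i) - al (Suc i) * real (card (Gs i))) + r ^ Suc i * Opt"
            using ih by (simp add: algebra_simps)
          also have "\<dots> = f (Gs i) + al (Suc i) * (real k - real (card (Gs i)))"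
            using kal[of "Suc i"] by (simp add: algebra_simps)
          also have "\<dots> \<le> f (Gs (Suc i))"
            using st ck by simp
          finally have a: "f (Gs (Suc i)) \<ge> Opt * (1 - (real i + 1) * (1 - r) * r ^ i)" .
          have "(real i + 1) * (1 - r) * r ^ i \<le> r ^ t" using bern[OF Suc.prems] unfolding r_def .
          then have "Opt * (1 - (real i + 1) * (1 - r) * r ^ i) \<ge> Opt * (1 - r ^ t)"
            using Opt0 by (simp add: mult_left_mono)
          with a show ?thesis unfolding Inv_def using ck by auto
        qed
      qed
    qed
  qed
  obtain t' where t': "t = Suc t'" using assms(8) by (cases t) auto
  have "f (Gs t) \<ge> Opt * (1 - r ^ t)"
  proof (cases "card (Gs t) < k")
    case True then show ?thesis using step[of t'] t' by simp
  next
    case False then show ?thesis using inv[of t] unfolding Inv_def by auto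
  qed
  then show ?thesis unfolding Gs_def Opt_def r_def by (simp add: algebra_simps)
qed

end
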